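(* Let $n\ge 1$, let $C$ be a real $m\times n$ matrix, and let $\Delta=\{\vec u\in\{-1,0,1\}^n : C\vec u=\vec 0\}$. For $\vec u\in\Delta$ define the $n$-qubit operator $$H_c(\vec u)=\sigma_1^{u_1}\sigma_2^{u_2}\cdots\sigma_n^{u_n}+\sigma_1^{-u_1}\sigma_2^{-u_2}\cdots\sigma_n^{-u_n},$$ and let $H^d=\sum_{\vec u\in\Delta}H_c(\vec u)$. Let $(c_1,\dots,c_n)$ be any row of $C$ and let $\hat C=\sum_{i=1}^n c_i\sigma^z_i$ be the corresponding constraint operator. Let $\beta\in\mathbb{R}$, let $|x\rangle$ be any $n$-qubit state, and let $\hat B=\prod_{\vec u\in\Delta}e^{-i\beta H_c(\vec u)}$ (the product of these unitaries taken in any fixed order). Set $|x_c\rangle=e^{-i\beta H^d}|x\rangle$ and $|x_s\rangle=\hat B|x\rangle$. Then $$\langle x_s|\hat C|x_s\rangle=\langle x_c|\hat C|x_c\rangle .$$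
   Context: Qubits are labelled $1,\dots,n$. For a single-qubit operator $A$, $A_i$ (or $A$ with subscript $i$) denotes $A$ acting on qubit $i$ tensored with the identity on all other qubits; products such as $\sigma_1^{u_1}\cdots\sigma_n^{u_n}$ are thus tensor products. The single-qubit matrices are $\sigma^{+1}=\begin{pmatrix}0&0\\1&0\end{pmatrix}$, $\sigma^{0}=\begin{pmatrix}1&0\\0&1\end{pmatrix}$, $\sigma^{-1}=\begin{pmatrix}0&1\\0&0\end{pmatrix}$ (in the computational basis $|0\rangle,|1\rangle$), and $\sigma^z=\begin{pmatrix}1&0\\0&-1\end{pmatrix}$ is the Pauli $Z$ matrix. The operator $\hat C$ encodes the linear constraint $\sum_i c_i x_i=c$ on binary variables, with $x_i$ corresponding to $(I-\sigma^z_i)/2$. *)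

theory Defs
  imports "Jordan_Normal_Form.Matrix"
begin

text \<open>n-qubit operators are complex 2^n x 2^n matrices; basis index a < 2^n,
  qubit i (0-based, i.e. qubit i+1 of the paper) is bit i of a (bit = 1 means basis state |1>).\<close>

definition sigma :: "int \<Rightarrow> bool \<Rightarrow> bool \<Rightarrow> complex" where
  "sigma u r s = (if u = 1 then (if r \<and> \<not> s then 1 else 0)
                 else if u = -1 then (if \<not> r \<and> s then 1 else 0)
                 else if u = 0 then (if r = s then 1 else 0) else 0)"

definition sigma_z :: "bool \<Rightarrow> bool \<Rightarrow> complex" where
  "sigma_z r s = (if r = s then (if r then -1 else 1) else 0)"

definition sigma_prod :: "nat \<Rightarrow> (nat \<Rightarrow> int) \<Rightarrow> complex mat" where
  "sigma_prod n u = mat (2^n) (2^n) (\<lambda>(a,b). \<Prod>i<n. sigma (u i) (bit a i) (bit b i))"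

definition op_on :: "nat \<Rightarrow> nat \<Rightarrow> (bool \<Rightarrow> bool \<Rightarrow> complex) \<Rightarrow> complex mat" where
  "op_on n i A = mat (2^n) (2^n)
     (\<lambda>(a,b). \<Prod>j<n. (if j = i then A (bit a j) (bit b j) else (if bit a j = bit b j then 1 else 0)))"

definition H_c :: "nat \<Rightarrow> (nat \<Rightarrow> int) \<Rightarrow> complex mat" where
  "H_c n u = sigma_prod n u + sigma_prod n (\<lambda>i. - u i)"

definition Delta :: "nat \<Rightarrow> real mat \<Rightarrow> (nat \<Rightarrow> int) set" where
  "Delta n C = {u. (\<forall>i<n. u i \<in> {-1,0,1}) \<and> (\<forall>i\<ge>n. u i = 0)
                  \<and> (\<forall>r<dim_row C. (\<Sum>i<n. C $$ (r,i) * of_int (u i)) = 0)}"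

definition H_d :: "nat \<Rightarrow> real mat \<Rightarrow> complex mat" where
  "H_d n C = mat (2^n) (2^n) (\<lambda>(a,b). \<Sum>u\<in>Delta n C. H_c n u $$ (a,b))"

definition C_hat :: "nat \<Rightarrow> (nat \<Rightarrow> real) \<Rightarrow> complex mat" where
  "C_hat n c = mat (2^n) (2^n) (\<lambda>(a,b). \<Sum>i<n. complex_of_real (c i) * op_on n i sigma_z $$ (a,b))"

definition mat_exp :: "complex mat \<Rightarrow> complex mat" where
  "mat_exp A = mat (dim_row A) (dim_row A) (\<lambda>(i,j). \<Sum>k. (A ^\<^sub>m k) $$ (i,j) / of_nat (fact k))"

definition B_hat :: "nat \<Rightarrow> real \<Rightarrow> (nat \<Rightarrow> int) list \<Rightarrow> complex mat" where
  "B_hat n \<beta> us = foldr (\<lambda>u M. mat_exp ((- \<i> * complex_of_real \<beta>) \<cdot>\<^sub>m H_c n u) * M) us (1\<^sub>m (2^n))"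

definition expval :: "complex mat \<Rightarrow> complex vec \<Rightarrow> complex" where
  "expval M v = (\<Sum>i<dim_vec v. cnj (v $ i) * (M *\<^sub>v v) $ i)"

end

theory Submission
  imports Defs
begin


lemma mult_entry:
  assumes "A \<in> carrier_mat N K" "B \<in> carrier_mat K M" "i < N" "j < M"
  shows "(A * B) $$ (i,j) = (\<Sum>l<K. A $$ (i,l) * B $$ (l,j))"
  using assms by (auto simp: scalar_prod_def lessThan_atLeast0 intro!: sum.cong)

lemma pow_add_mat:
  assumes "(A :: 'a::semiring_1 mat) \<in> carrier_mat N N"
  shows "A ^\<^sub>m p * A ^\<^sub>m q = A ^\<^sub>m (p + q)"
proof (induction q)
  case 0
  then show ?case using assms by simp
next
  case (Suc q)
  have "A ^\<^sub>m p * A ^\<^sub>m Suc q = (A ^\<^sub>m p * A ^\<^sub>m q) * A"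
    using assms by (simp add: assoc_mult_mat[symmetric, of _ N N _ N _ N])
  then show ?case using Suc by simp
qed

lemma pow_entry_bound:
  fixes A :: "complex mat"
  assumes A: "A \<in> carrier_mat N N" and m: "m = (\<Sum>a<N. \<Sum>b<N. norm (A $$ (a,b)))"
  shows "\<forall>i<N. \<forall>j<N. norm ((A ^\<^sub>m k) $$ (i,j)) \<le> m ^ k"
proof (induction k)
  case 0
  have "0 \<le> m" unfolding m by (intro sum_nonneg) auto
  then show ?case using A by auto
next
  case (Suc k)
  show ?case
  proof (intro allI impI)
    fix i j assume ij: "i < N" "j < N"
    have colb: "(\<Sum>l<N. norm (A $$ (l,j))) \<le> m"
    proof -
      have "(\<Sum>l<N. norm (A $$ (l,j))) \<le> (\<Sum>l<N. \<Sum>b<N. norm (A $$ (l,b)))"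
        using ij by (intro sum_mono member_le_sum) auto
      then show ?thesis unfolding m .
    qed
    have "(A ^\<^sub>m Suc k) $$ (i,j) = (\<Sum>l<N. (A ^\<^sub>m k) $$ (i,l) * A $$ (l,j))"
      using mult_entry[of "A ^\<^sub>m k" N N A N i j] A ij by simp
    hence "norm ((A ^\<^sub>m Suc k) $$ (i,j)) \<le> (\<Sum>l<N. norm ((A ^\<^sub>m k) $$ (i,l)) * norm (A $$ (l,j)))"
      by (simp add: norm_mult[symmetric] norm_sum)
    also have "\<dots> \<le> (\<Sum>l<N. m ^ k * norm (A $$ (l,j)))"
      using Suc ij by (intro sum_mono mult_right_mono) auto
    also have "\<dots> = m ^ k * (\<Sum>l<N. norm (A $$ (l,j)))" by (simp add: sum_distrib_left)
    also have "\<dots> \<le> m ^ k * m"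
      using colb by (intro mult_left_mono) (auto simp: m intro!: sum_nonneg zero_le_power)
    finally show "norm ((A ^\<^sub>m Suc k) $$ (i,j)) \<le> m ^ Suc k" by (simp add: mult.commute)
  qed
qed

lemma exp_summable:
  fixes A :: "complex mat"
  assumes A: "A \<in> carrier_mat N N" and ij: "i < N" "j < N"
  shows "summable (\<lambda>k. norm ((A ^\<^sub>m k) $$ (i,j) / of_nat (fact k)))"
proof -
  define m where "m = (\<Sum>a<N. \<Sum>b<N. norm (A $$ (a,b)))"
  have b: "norm ((A ^\<^sub>m k) $$ (i,j)) \<le> m ^ k" for k
    using pow_entry_bound[OF A m_def] ij by auto
  show ?thesis
  proof (rule summable_comparison_test[OF _ summable_exp[of m]])
    show "\<exists>N. \<forall>n\<ge>N. norm (norm ((A ^\<^sub>m n) $$ (i, j) / of_nat (fact n))) \<le> inverse (fact n) * m ^ n"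
      using b by (auto simp: norm_divide divide_simps mult.commute)
  qed
qed

lemma cnj_pow:
  fixes A :: "complex mat"
  assumes A: "A \<in> carrier_mat N N"
    and anti: "\<And>a b. a < N \<Longrightarrow> b < N \<Longrightarrow> cnj (A $$ (b,a)) = - A $$ (a,b)"
  shows "\<forall>i<N. \<forall>l<N. cnj ((A ^\<^sub>m k) $$ (l,i)) = (-1)^k * (A ^\<^sub>m k) $$ (i,l)"
proof (induction k)
  case 0
  then show ?case using A by auto
next
  case (Suc k)
  show ?case
  proof (intro allI impI)
    fix i l assume il: "i < N" "l < N"
    have A1: "A ^\<^sub>m 1 = A" using A by simp
    have comm: "A * A ^\<^sub>m k = A ^\<^sub>m Suc k"
      using pow_add_mat[OF A, of 1 k] A1 by simp
    have "cnj ((A ^\<^sub>m Suc k) $$ (l,i)) = cnj (\<Sum>m<N. (A ^\<^sub>m k) $$ (l,m) * A $$ (m,i))"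
      using mult_entry[of "A ^\<^sub>m k" N N A N l i] A il by simp
    also have "\<dots> = (\<Sum>m<N. (-1)^k * (A ^\<^sub>m k) $$ (m,l) * (- A $$ (i,m)))"
      using Suc il anti by (auto intro!: sum.cong)
    also have "\<dots> = (-1)^Suc k * (\<Sum>m<N. A $$ (i,m) * (A ^\<^sub>m k) $$ (m,l))"
      by (simp add: sum_distrib_left algebra_simps)
    also have "(\<Sum>m<N. A $$ (i,m) * (A ^\<^sub>m k) $$ (m,l)) = (A * A ^\<^sub>m k) $$ (i,l)"
      using mult_entry[of A N N "A ^\<^sub>m k" N i l] A il by simp
    finally show "cnj ((A ^\<^sub>m Suc k) $$ (l,i)) = (-1)^Suc k * (A ^\<^sub>m Suc k) $$ (i,l)"
      using comm by simp
  qed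
qed

lemma mat_exp_entry:
  assumes "A \<in> carrier_mat N N" "i < N" "j < N"
  shows "mat_exp A $$ (i,j) = (\<Sum>k. (A ^\<^sub>m k) $$ (i,j) / of_nat (fact k))"
  using assms unfolding mat_exp_def by simp

lemma mat_exp_carrier: "A \<in> carrier_mat N N \<Longrightarrow> mat_exp A \<in> carrier_mat N N"
  unfolding mat_exp_def by simp

lemma mat_exp_sums:
  assumes "A \<in> carrier_mat N N" "i < N" "j < N"
  shows "(\<lambda>k. (A ^\<^sub>m k) $$ (i,j) / of_nat (fact k)) sums (mat_exp A $$ (i,j))"
  using summable_norm_cancel[OF exp_summable[OF assms]] mat_exp_entry[OF assms]
  by (simp add: summable_sums)

lemma alt_term:
  fixes A :: "complex mat"
  assumes A: "A \<in> carrier_mat N N" and ij: "i < N" "j < N"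
  shows "(\<Sum>l<N. \<Sum>p\<le>k. ((-1)^p * (A ^\<^sub>m p) $$ (i,l) / of_nat (fact p)) *
             ((A ^\<^sub>m (k - p)) $$ (l,j) / of_nat (fact (k - p))))
         = (if k = 0 then (if i = j then 1 else 0) else 0)"
proof -
  have "(\<Sum>l<N. \<Sum>p\<le>k. ((-1)^p * (A ^\<^sub>m p) $$ (i,l) / of_nat (fact p)) *
             ((A ^\<^sub>m (k - p)) $$ (l,j) / of_nat (fact (k - p))))
      = (\<Sum>p\<le>k. ((-1)^p / (of_nat (fact p) * of_nat (fact (k-p)))) *
           (\<Sum>l<N. (A ^\<^sub>m p) $$ (i,l) * (A ^\<^sub>m (k - p)) $$ (l,j)))"
    by (subst sum.swap) (auto simp: sum_distrib_left intro!: sum.cong)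
  also have "\<dots> = (\<Sum>p\<le>k. ((-1)^p / (of_nat (fact p) * of_nat (fact (k-p)))) * (A ^\<^sub>m k) $$ (i,j))"
  proof (intro sum.cong refl)
    fix p assume "p \<in> {..k}"
    hence "A ^\<^sub>m p * A ^\<^sub>m (k - p) = A ^\<^sub>m k" using pow_add_mat[OF A, of p "k-p"] by simp
    moreover have "(A ^\<^sub>m p * A ^\<^sub>m (k - p)) $$ (i,j) = (\<Sum>l<N. (A ^\<^sub>m p) $$ (i,l) * (A ^\<^sub>m (k - p)) $$ (l,j))"
      using mult_entry[of "A ^\<^sub>m p" N N "A ^\<^sub>m (k-p)" N i j] A ij by simp
    ultimately show "((-1)^p / (of_nat (fact p) * of_nat (fact (k-p)))) * (\<Sum>l<N. (A ^\<^sub>m p) $$ (i,l) * (A ^\<^sub>m (k - p)) $$ (l,j))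
       = ((-1)^p / (of_nat (fact p) * of_nat (fact (k-p)))) * (A ^\<^sub>m k) $$ (i,j)" by simp
  qed
  also have "\<dots> = (A ^\<^sub>m k) $$ (i,j) / of_nat (fact k) * (\<Sum>p\<le>k. (-1)^p * of_nat (k choose p))"
  proof -
    have "(-1)^p / (of_nat (fact p) * of_nat (fact (k-p))) = (-1)^p * of_nat (k choose p) / (of_nat (fact k) :: complex)"
      if "p \<le> k" for p
      using binomial_fact[OF that, where 'a=complex] by (simp add: field_simps)
    then show ?thesis by (auto simp: sum_distrib_left intro!: sum.cong)
  qed
  also have "\<dots> = (if k = 0 then (if i = j then 1 else 0) else 0)"
    using choose_alternating_sum[of k, where 'a=complex] A ij by auto
  finally show ?thesis .
qed

lemma mat_exp_unitary:
  fixes A :: "complex mat"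
  assumes A: "A \<in> carrier_mat N N"
    and anti: "\<And>a b. a < N \<Longrightarrow> b < N \<Longrightarrow> cnj (A $$ (b,a)) = - A $$ (a,b)"
    and ij: "i < N" "j < N"
  shows "(\<Sum>l<N. cnj (mat_exp A $$ (l,i)) * mat_exp A $$ (l,j)) = (if i = j then 1 else 0)"
proof -
  define a where "a l k = (-1)^k * (A ^\<^sub>m k) $$ (i,l) / of_nat (fact k)" for l k
  define b where "b l k = (A ^\<^sub>m k) $$ (l,j) / of_nat (fact k)" for l k
  have cp: "(\<lambda>k. \<Sum>p\<le>k. a l p * b l (k - p)) sums (cnj (mat_exp A $$ (l,i)) * mat_exp A $$ (l,j))"
    if l: "l < N" for l
  proof -
    have sa: "a l sums cnj (mat_exp A $$ (l,i))"
    proof -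
      have "(\<lambda>k. cnj ((A ^\<^sub>m k) $$ (l,i) / of_nat (fact k))) sums cnj (mat_exp A $$ (l,i))"
        by (subst sums_cnj) (rule mat_exp_sums[OF A l ij(1)])
      moreover have "cnj ((A ^\<^sub>m k) $$ (l,i) / of_nat (fact k)) = a l k" for k
        using cnj_pow[OF A anti, of k] l ij by (simp add: a_def)
      ultimately show ?thesis by simp
    qed
    have sb: "b l sums mat_exp A $$ (l,j)" using mat_exp_sums[OF A l ij(2)] by (simp add: b_def[abs_def])
    have na: "summable (\<lambda>k. norm (a l k))"
      using exp_summable[OF A ij(1) l] by (simp add: a_def norm_mult norm_divide norm_power)
    have nb: "summable (\<lambda>k. norm (b l k))"
      using exp_summable[OF A l ij(2)] by (simp add: b_def)
    show ?thesis using Cauchy_product_sums[OF na nb] sums_unique[OF sa] sums_unique[OF sb] by simp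
  qed
  have "(\<lambda>k. \<Sum>l<N. \<Sum>p\<le>k. a l p * b l (k - p)) sums (\<Sum>l<N. cnj (mat_exp A $$ (l,i)) * mat_exp A $$ (l,j))"
    by (rule sums_sum) (use cp in auto)
  moreover have "(\<Sum>l<N. \<Sum>p\<le>k. a l p * b l (k - p)) = (if k = 0 then (if i = j then 1 else 0) else 0)" for k
    using alt_term[OF A ij, of k] by (simp add: a_def b_def)
  ultimately have s1: "(\<lambda>k. if k = 0 then (if i = j then 1 else 0) else 0) sums (\<Sum>l<N. cnj (mat_exp A $$ (l,i)) * mat_exp A $$ (l,j))"
    by simp
  have s2: "(\<lambda>k. if k = 0 then (if i = j then 1 else 0) else 0) sums ((if i = j then 1 else 0) :: complex)"
    using sums_single[of 0 "\<lambda>_. (if i = j then 1 else 0) :: complex"] by simp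
  show ?thesis by (rule sums_unique2[OF s1 s2])
qed



definition lam :: "nat \<Rightarrow> (nat \<Rightarrow> real) \<Rightarrow> nat \<Rightarrow> complex" where
  "lam n c a = (\<Sum>i<n. complex_of_real (c i) * (if bit a i then -1 else 1))"

lemma bits_eq:
  fixes a b :: nat
  assumes "a < 2^n" "b < 2^n" "\<forall>j<n. bit a j = bit b j"
  shows "a = b"
proof -
  have t: "take_bit n a = a" "take_bit n b = b" using assms by (auto simp: take_bit_nat_eq_self)
  have "bit a j = bit b j" for j
    using assms(3) bit_take_bit_iff[of n a j] bit_take_bit_iff[of n b j] t by auto
  then show ?thesis by (simp add: bit_eq_iff)
qed

lemma op_on_z_entry:
  assumes "i < n" "a < 2^n" "b < 2^n"
  shows "op_on n i sigma_z $$ (a,b) = (if a = b then (if bit a i then -1 else 1) else 0)"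
proof (cases "a = b")
  case True
  have "op_on n i sigma_z $$ (a,b) = (\<Prod>j<n. (if j = i then sigma_z (bit a j) (bit b j) else (if bit a j = bit b j then 1 else 0)))"
    using assms unfolding op_on_def by simp
  also have "\<dots> = (\<Prod>j<n. if j = i then sigma_z (bit a j) (bit a j) else 1)"
    using True by (intro prod.cong) auto
  also have "\<dots> = sigma_z (bit a i) (bit a i)"
    using assms by (simp add: prod.delta)
  finally show ?thesis using True by (simp add: sigma_z_def)
next
  case False
  then obtain j where j: "j < n" "bit a j \<noteq> bit b j" using bits_eq assms by blast
  have "op_on n i sigma_z $$ (a,b) = (\<Prod>j<n. (if j = i then sigma_z (bit a j) (bit b j) else (if bit a j = bit b j then 1 else 0)))"
    using assms unfolding op_on_def by simp
  also have "\<dots> = 0"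
    by (rule prod_zero) (use j in \<open>auto simp: sigma_z_def intro!: bexI[of _ j]\<close>)
  finally show ?thesis using False by simp
qed

lemma C_hat_entry:
  assumes "a < 2^n" "b < 2^n"
  shows "C_hat n c $$ (a,b) = (if a = b then lam n c a else 0)"
  using assms unfolding C_hat_def lam_def
  by (auto simp: op_on_z_entry intro!: sum.cong)

lemma C_hat_carrier: "C_hat n c \<in> carrier_mat (2^n) (2^n)"
  unfolding C_hat_def by simp

definition ev :: "nat \<Rightarrow> (nat \<Rightarrow> real) \<Rightarrow> complex vec \<Rightarrow> complex" where
  "ev n c w = (\<Sum>a<2^n. cnj (w $ a) * lam n c a * w $ a)"

lemma expval_ev:
  assumes "dim_vec v = 2^n"
  shows "expval (C_hat n c) v = ev n c v"
proof -
  have "(C_hat n c *\<^sub>v v) $ a = lam n c a * v $ a" if a: "a < 2^n" for a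
  proof -
    have "(C_hat n c *\<^sub>v v) $ a = (\<Sum>b\<in>{0..<2^n}. C_hat n c $$ (a,b) * v $ b)"
      using a assms C_hat_carrier[of n c] by (simp add: scalar_prod_def)
    also have "\<dots> = (\<Sum>b\<in>{0..<2^n}. if b = a then lam n c a * v $ a else 0)"
      using a by (intro sum.cong refl) (auto simp: C_hat_entry)
    also have "\<dots> = lam n c a * v $ a" using a by (simp add: sum.delta)
    finally show ?thesis .
  qed
  then show ?thesis unfolding expval_def ev_def using assms by (auto intro!: sum.cong)
qed



definition compat :: "nat \<Rightarrow> (nat \<Rightarrow> real) \<Rightarrow> complex mat \<Rightarrow> bool" where
  "compat n c M \<longleftrightarrow> (\<forall>a<2^n. \<forall>b<2^n. M $$ (a,b) = 0 \<or> lam n c a = lam n c b)"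

lemma sgn_diff:
  assumes "sigma u r s \<noteq> 0"
  shows "(if r then -1 else 1) - (if s then -1 else 1) = (-2) * (of_int u :: complex)"
  using assms unfolding sigma_def by (auto split: if_splits)

lemma compat_sigma_prod:
  assumes "(\<Sum>i<n. c i * of_int (u i)) = 0"
  shows "compat n c (sigma_prod n u)"
  unfolding compat_def
proof (intro allI impI)
  fix a b :: nat assume ab: "a < 2^n" "b < 2^n"
  show "sigma_prod n u $$ (a,b) = 0 \<or> lam n c a = lam n c b"
  proof (cases "\<forall>i<n. sigma (u i) (bit a i) (bit b i) \<noteq> 0")
    case True
    have "lam n c a - lam n c b = (\<Sum>i<n. complex_of_real (c i) * ((if bit a i then -1 else 1) - (if bit b i then -1 else 1)))"
      unfolding lam_def by (simp add: sum_subtractf[symmetric] algebra_simps)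
    also have "\<dots> = (\<Sum>i<n. complex_of_real (c i) * ((-2) * of_int (u i)))"
    proof (intro sum.cong refl)
      fix i assume "i \<in> {..<n}"
      then have "sigma (u i) (bit a i) (bit b i) \<noteq> 0" using True by auto
      from sgn_diff[OF this] show "complex_of_real (c i) * ((if bit a i then -1 else 1) - (if bit b i then -1 else 1))
          = complex_of_real (c i) * ((-2) * of_int (u i))" by simp
    qed
    also have "\<dots> = (-2) * complex_of_real (\<Sum>i<n. c i * of_int (u i))"
      by (simp add: sum_distrib_left algebra_simps)
    also have "\<dots> = 0" using assms by simp
    finally show ?thesis by simp
  next
    case False
    then obtain i where "i < n" "sigma (u i) (bit a i) (bit b i) = 0" by auto
    then have "(\<Prod>i<n. sigma (u i) (bit a i) (bit b i)) = 0"
      by (intro prod_zero) auto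
    then show ?thesis using ab unfolding sigma_prod_def by simp
  qed
qed

lemma compat_add:
  "compat n c A \<Longrightarrow> compat n c B \<Longrightarrow> A \<in> carrier_mat (2^n) (2^n) \<Longrightarrow> B \<in> carrier_mat (2^n) (2^n)
   \<Longrightarrow> compat n c (A + B)"
  unfolding compat_def by fastforce

lemma compat_smult:
  "compat n c A \<Longrightarrow> A \<in> carrier_mat (2^n) (2^n) \<Longrightarrow> compat n c (k \<cdot>\<^sub>m A)"
  unfolding compat_def by fastforce

lemma compat_mult:
  assumes "compat n c A" "compat n c B" "A \<in> carrier_mat (2^n) (2^n)" "B \<in> carrier_mat (2^n) (2^n)"
  shows "compat n c (A * B)"
  unfolding compat_def
proof (intro allI impI)
  fix a b :: nat assume ab: "a < 2^n" "b < 2^n"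
  show "(A * B) $$ (a,b) = 0 \<or> lam n c a = lam n c b"
  proof (cases "lam n c a = lam n c b")
    case False
    have "(A * B) $$ (a,b) = (\<Sum>l<2^n. A $$ (a,l) * B $$ (l,b))"
      using mult_entry[OF assms(3,4) ab] .
    also have "\<dots> = 0"
      using assms(1,2) ab False unfolding compat_def by (intro sum.neutral) fastforce
    finally show ?thesis by simp
  qed simp
qed

lemma compat_pow:
  assumes "compat n c A" "A \<in> carrier_mat (2^n) (2^n)"
  shows "compat n c (A ^\<^sub>m k)"
proof (induction k)
  case 0
  then show ?case using assms unfolding compat_def by auto
next
  case (Suc k)
  then show ?case using compat_mult[OF Suc _ pow_carrier_mat assms(2)] assms by simp
qed

lemma compat_exp:
  assumes "compat n c A" "A \<in> carrier_mat (2^n) (2^n)"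
  shows "compat n c (mat_exp A)"
  unfolding compat_def
proof (intro allI impI)
  fix a b :: nat assume ab: "a < 2^n" "b < 2^n"
  show "mat_exp A $$ (a,b) = 0 \<or> lam n c a = lam n c b"
  proof (cases "lam n c a = lam n c b")
    case False
    have "(A ^\<^sub>m k) $$ (a,b) = 0" for k
      using compat_pow[OF assms, of k] ab False unfolding compat_def by blast
    then show ?thesis using mat_exp_entry[OF assms(2) ab] by simp
  qed simp
qed

lemma preserve:
  fixes M :: "complex mat"
  assumes M: "M \<in> carrier_mat (2^n) (2^n)" and cm: "compat n c M"
    and un: "\<And>i j. i < 2^n \<Longrightarrow> j < 2^n \<Longrightarrow> (\<Sum>l<2^n. cnj (M $$ (l,i)) * M $$ (l,j)) = (if i = j then 1 else 0)"
    and v: "v \<in> carrier_vec (2^n)"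
  shows "ev n c (M *\<^sub>v v) = ev n c v"
proof -
  let ?N = "2^n :: nat"
  have mv: "(M *\<^sub>v v) $ a = (\<Sum>b<?N. M $$ (a,b) * v $ b)" if "a < ?N" for a
    using M v that by (auto simp: scalar_prod_def lessThan_atLeast0 intro!: sum.cong)
  have key: "lam n c a * M $$ (a,d) = M $$ (a,d) * lam n c d" if "a < ?N" "d < ?N" for a d
    using cm that unfolding compat_def by (metis mult.commute mult_zero_left mult_zero_right)
  have step1: "cnj ((M *\<^sub>v v) $ a) * lam n c a * (M *\<^sub>v v) $ a
     = (\<Sum>b<?N. \<Sum>d<?N. cnj (v $ b) * lam n c d * v $ d * (cnj (M $$ (a,b)) * M $$ (a,d)))"
    if a: "a < ?N" for a
  proof -
    have "cnj ((M *\<^sub>v v) $ a) * lam n c a * (M *\<^sub>v v) $ a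
       = (\<Sum>b<?N. cnj (M $$ (a,b)) * cnj (v $ b)) * (\<Sum>d<?N. lam n c a * M $$ (a,d) * v $ d)"
      using a by (simp add: mv sum_distrib_left mult.assoc)
    also have "\<dots> = (\<Sum>b<?N. \<Sum>d<?N. (cnj (M $$ (a,b)) * cnj (v $ b)) * (lam n c a * M $$ (a,d) * v $ d))"
      by (rule sum_product)
    also have "\<dots> = (\<Sum>b<?N. \<Sum>d<?N. cnj (v $ b) * lam n c d * v $ d * (cnj (M $$ (a,b)) * M $$ (a,d)))"
    proof (intro sum.cong refl)
      fix b d assume "d \<in> {..<?N}"
      then have "lam n c a * M $$ (a,d) = M $$ (a,d) * lam n c d" using key a by auto
      then show "(cnj (M $$ (a,b)) * cnj (v $ b)) * (lam n c a * M $$ (a,d) * v $ d)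
          = cnj (v $ b) * lam n c d * v $ d * (cnj (M $$ (a,b)) * M $$ (a,d))"
        by (simp add: ac_simps)
    qed
    finally show ?thesis .
  qed
  have "ev n c (M *\<^sub>v v) = (\<Sum>a<?N. \<Sum>b<?N. \<Sum>d<?N. cnj (v $ b) * lam n c d * v $ d * (cnj (M $$ (a,b)) * M $$ (a,d)))"
    unfolding ev_def using step1 by (intro sum.cong refl) auto
  also have "\<dots> = (\<Sum>b<?N. \<Sum>a<?N. \<Sum>d<?N. cnj (v $ b) * lam n c d * v $ d * (cnj (M $$ (a,b)) * M $$ (a,d)))"
    by (rule sum.swap)
  also have "\<dots> = (\<Sum>b<?N. \<Sum>d<?N. \<Sum>a<?N. cnj (v $ b) * lam n c d * v $ d * (cnj (M $$ (a,b)) * M $$ (a,d)))"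
    by (intro sum.cong refl sum.swap)
  also have "\<dots> = (\<Sum>b<?N. \<Sum>d<?N. cnj (v $ b) * lam n c d * v $ d * (\<Sum>a<?N. cnj (M $$ (a,b)) * M $$ (a,d)))"
    by (simp only: sum_distrib_left)
  also have "\<dots> = (\<Sum>b<?N. \<Sum>d<?N. if b = d then cnj (v $ b) * lam n c b * v $ b else 0)"
    by (intro sum.cong refl) (simp add: un)
  also have "\<dots> = ev n c v" unfolding ev_def by simp
  finally show ?thesis .
qed



lemma sigma_swap: "sigma (- u) r s = sigma u s r"
  unfolding sigma_def by auto

lemma cnj_sigma: "cnj (sigma u r s) = sigma u r s"
  unfolding sigma_def by auto

lemma sigma_prod_carrier: "sigma_prod n u \<in> carrier_mat (2^n) (2^n)"
  unfolding sigma_prod_def by simp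

lemma H_c_carrier: "H_c n u \<in> carrier_mat (2^n) (2^n)"
  unfolding H_c_def using sigma_prod_carrier by simp

lemma cnj_sigma_prod:
  assumes "a < 2^n" "b < 2^n"
  shows "cnj (sigma_prod n u $$ (b,a)) = sigma_prod n (\<lambda>i. - u i) $$ (a,b)"
  using assms unfolding sigma_prod_def by (simp add: cnj_sigma sigma_swap)

lemma H_c_entry:
  assumes "a < 2^n" "b < 2^n"
  shows "H_c n u $$ (a,b) = sigma_prod n u $$ (a,b) + sigma_prod n (\<lambda>i. - u i) $$ (a,b)"
  using assms unfolding H_c_def by (simp add: sigma_prod_def)

lemma H_c_herm:
  assumes "a < 2^n" "b < 2^n"
  shows "cnj (H_c n u $$ (b,a)) = H_c n u $$ (a,b)"
  using assms cnj_sigma_prod[OF assms, of u] cnj_sigma_prod[OF assms, of "\<lambda>i. - u i"]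
  by (simp add: H_c_entry)

lemma H_d_carrier: "H_d n C \<in> carrier_mat (2^n) (2^n)"
  unfolding H_d_def by simp

lemma H_d_herm:
  assumes "a < 2^n" "b < 2^n"
  shows "cnj (H_d n C $$ (b,a)) = H_d n C $$ (a,b)"
  using assms unfolding H_d_def by (simp add: H_c_herm)

lemma compat_H_c:
  assumes "(\<Sum>i<n. c i * of_int (u i)) = 0"
  shows "compat n c (H_c n u)"
proof -
  have "(\<Sum>i<n. c i * of_int (- u i)) = - (\<Sum>i<n. c i * of_int (u i))"
    by (simp add: sum_negf[symmetric])
  then have "(\<Sum>i<n. c i * of_int (- u i)) = 0" using assms by simp
  then show ?thesis unfolding H_c_def
    using compat_add[OF compat_sigma_prod[OF assms] compat_sigma_prod sigma_prod_carrier sigma_prod_carrier]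
    by simp
qed

lemma compat_H_d:
  assumes "\<And>u. u \<in> Delta n C \<Longrightarrow> compat n c (H_c n u)"
  shows "compat n c (H_d n C)"
  unfolding compat_def
proof (intro allI impI)
  fix a b :: nat assume ab: "a < 2^n" "b < 2^n"
  show "H_d n C $$ (a,b) = 0 \<or> lam n c a = lam n c b"
  proof (cases "lam n c a = lam n c b")
    case False
    have "H_d n C $$ (a,b) = (\<Sum>u\<in>Delta n C. H_c n u $$ (a,b))" using ab unfolding H_d_def by simp
    also have "\<dots> = 0" using assms ab False unfolding compat_def by (intro sum.neutral) blast
    finally show ?thesis by simp
  qed simp
qed

definition Qp :: "nat \<Rightarrow> (nat \<Rightarrow> real) \<Rightarrow> complex mat \<Rightarrow> bool" where
  "Qp n c M \<longleftrightarrow> M \<in> carrier_mat (2^n) (2^n) \<and> (\<forall>v\<in>carrier_vec (2^n). ev n c (M *\<^sub>v v) = ev n c v)"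

lemma Qp_exp:
  assumes H: "H \<in> carrier_mat (2^n) (2^n)" and herm: "\<And>a b. a < 2^n \<Longrightarrow> b < 2^n \<Longrightarrow> cnj (H $$ (b,a)) = H $$ (a,b)"
    and cm: "compat n c H"
  shows "Qp n c (mat_exp ((- \<i> * complex_of_real \<beta>) \<cdot>\<^sub>m H))"
proof -
  let ?A = "(- \<i> * complex_of_real \<beta>) \<cdot>\<^sub>m H"
  have A: "?A \<in> carrier_mat (2^n) (2^n)" using H by simp
  have anti: "cnj (?A $$ (b,a)) = - ?A $$ (a,b)" if "a < 2^n" "b < 2^n" for a b
    using H that herm[OF that] by simp
  have cA: "compat n c ?A" using compat_smult[OF cm H] .
  show ?thesis unfolding Qp_def
    using mat_exp_carrier[OF A] preserve[OF mat_exp_carrier[OF A] compat_exp[OF cA A] mat_exp_unitary[OF A anti]]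
    by auto
qed

lemma Qp_mult: "Qp n c M1 \<Longrightarrow> Qp n c M2 \<Longrightarrow> Qp n c (M1 * M2)"
  unfolding Qp_def by auto

lemma Qp_one: "Qp n c (1\<^sub>m (2^n))"
  unfolding Qp_def by auto



lemma Delta_row:
  assumes "u \<in> Delta n C" "r < dim_row C"
  shows "(\<Sum>i<n. C $$ (r,i) * of_int (u i)) = 0"
  using assms unfolding Delta_def by auto

lemma Qp_B_hat:
  assumes "set us \<subseteq> Delta n C" "r < dim_row C"
  shows "Qp n (\<lambda>i. C $$ (r,i)) (B_hat n \<beta> us)"
  using assms(1)
proof (induction us)
  case Nil
  then show ?case unfolding B_hat_def by (simp add: Qp_one)
next
  case (Cons u us)
  have u: "u \<in> Delta n C" using Cons by auto
  have "Qp n (\<lambda>i. C $$ (r,i)) (mat_exp ((- \<i> * complex_of_real \<beta>) \<cdot>\<^sub>m H_c n u))"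
    by (rule Qp_exp[OF H_c_carrier H_c_herm compat_H_c[OF Delta_row[OF u assms(2)]]])
  moreover have "B_hat n \<beta> (u # us) = mat_exp ((- \<i> * complex_of_real \<beta>) \<cdot>\<^sub>m H_c n u) * B_hat n \<beta> us"
    unfolding B_hat_def by simp
  ultimately show ?case using Qp_mult[of n _ _ "B_hat n \<beta> us"] Cons.IH Cons.prems by simp
qed

lemma Qp_carrier: "Qp n c M \<Longrightarrow> M \<in> carrier_mat (2^n) (2^n)"
  unfolding Qp_def by (erule conjunct1)

lemma Qp_pres: "Qp n c M \<Longrightarrow> v \<in> carrier_vec (2^n) \<Longrightarrow> ev n c (M *\<^sub>v v) = ev n c v"
  unfolding Qp_def by (elim conjE) (erule bspec)

theorem lemma1:
  fixes n :: nat and C :: "real mat" and r :: nat and \<beta> :: real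
    and x :: "complex vec" and us :: "(nat \<Rightarrow> int) list"
  assumes "n \<ge> 1"
    and "dim_col C = n"
    and "r < dim_row C"
    and "dim_vec x = 2^n"
    and "(\<Sum>i<2^n. (cmod (x $ i))^2) = 1"
    and "distinct us" and "set us = Delta n C"
  shows "let c = (\<lambda>i. C $$ (r,i));
             xc = mat_exp ((- \<i> * complex_of_real \<beta>) \<cdot>\<^sub>m H_d n C) *\<^sub>v x;
             xs = B_hat n \<beta> us *\<^sub>v x
         in expval (C_hat n c) xs = expval (C_hat n c) xc"
proof -
  define c where "c = (\<lambda>i. C $$ (r,i))"
  have xv: "x \<in> carrier_vec (2^n)" using assms(4) by (rule carrier_vecI)
  have Q1: "Qp n c (B_hat n \<beta> us)" unfolding c_def using Qp_B_hat[of us n C r \<beta>] assms by simp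
  have cH: "compat n c (H_d n C)"
  proof (rule compat_H_d)
    fix u assume "u \<in> Delta n C"
    from compat_H_c[OF Delta_row[OF this assms(3)]] show "compat n c (H_c n u)" unfolding c_def .
  qed
  have Q2: "Qp n c (mat_exp ((- \<i> * complex_of_real \<beta>) \<cdot>\<^sub>m H_d n C))"
    by (rule Qp_exp[OF H_d_carrier H_d_herm cH])
  have "expval (C_hat n c) (B_hat n \<beta> us *\<^sub>v x) = ev n c x"
  proof -
    have "B_hat n \<beta> us \<in> carrier_mat (2^n) (2^n)" using Q1 by (rule Qp_carrier)
    then have "dim_vec (B_hat n \<beta> us *\<^sub>v x) = 2^n" by simp
    then show ?thesis using Qp_pres[OF Q1 xv] expval_ev by metis
  qed
  moreover have "expval (C_hat n c) (mat_exp ((- \<i> * complex_of_real \<beta>) \<cdot>\<^sub>m H_d n C) *\<^sub>v x) = ev n c x"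
  proof -
    have "mat_exp ((- \<i> * complex_of_real \<beta>) \<cdot>\<^sub>m H_d n C) \<in> carrier_mat (2^n) (2^n)" using Q2 by (rule Qp_carrier)
    then have "dim_vec (mat_exp ((- \<i> * complex_of_real \<beta>) \<cdot>\<^sub>m H_d n C) *\<^sub>v x) = 2^n" by simp
    then show ?thesis using Qp_pres[OF Q2 xv] expval_ev by metis
  qed
  ultimately show ?thesis unfolding Let_def c_def[symmetric] by metis
qed


end
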